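(* Let $\Gamma$ be finite and $\alpha\in V$. The noncommutative formal power series $$P^\alpha-\mu(\alpha)\alpha=\sum_{\substack{n\ge1,\ \epsilon_1\cdots\epsilon_n\text{ a loop in }\vec\Gamma\\ \text{based at }\alpha}}\mathrm{Tr}(X_{\epsilon_1}\cdots X_{\epsilon_n})\,\epsilon_1\cdots\epsilon_n\ \in\ \mathbb C\langle\langle\mathscr X\rangle\rangle$$ is algebraic.
   Context: $\Gamma$ is a finite connected undirected graph (loops, multiple edges allowed), vertex set $V$, weighting $\mu:V\to(0,\infty)$. Directed version $\vec\Gamma$ (edge set $\vec E$): each edge with distinct endpoints $\alpha\ne\beta$ yields $\epsilon,\epsilon^{op}$ with $s(\epsilon)=t(\epsilon^{op})=\alpha$, $t(\epsilon)=s(\epsilon^{op})=\beta$; each loop yields one directed loop $\epsilon=\epsilon^{op}$. $\mathcal C=C_0(V)$, $p_\alpha$ indicator of $\alpha$; $\mathcal X$ the Hilbert $\mathcal C$-$\mathcal C$ bimodule spanned by directed edges with $p_\alpha\epsilon=\delta_{s(\epsilon),\alpha}\epsilon$, $\epsilon p_\alpha=\delta_{t(\epsilon),\alpha}\epsilon$, $\langle\epsilon'|\epsilon\rangle=\delta_{\epsilon,\epsilon'}p_{t(\epsilon)}$; $\mathcal F(\mathcal X)$ its full Fock space with creation operators $\ell(\xi)$. For a loop $e$: $X_e=\ell(\epsilon)+\ell(\epsilon)^*$; for $e$ with endpoints $\alpha\ne\beta$: $a_\epsilon=(\mu(\alpha)/\mu(\beta))^{1/4}$, $X_e=a_\epsilon\ell(\epsilon)+a_\epsilon^{-1}\ell(\epsilon^{op})^*+a_\epsilon^{-1}\ell(\epsilon^{op})+a_\epsilon\ell(\epsilon)^*$;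 $X_\epsilon=p_{s(\epsilon)}X_ep_{t(\epsilon)}$. $\mathrm{Tr}=\mathrm{tr}\circ E$ with $E(x)=PxP$ ($P$ projection onto $\mathcal C$), $\mathrm{tr}(p_v)=\mu(v)$. A loop based at $\alpha$ is a sequence $\epsilon_1,\dots,\epsilon_n$ with $s(\epsilon_1)=\alpha=t(\epsilon_n)$ and $t(\epsilon_k)=s(\epsilon_{k+1})$. Noncommutative series: $\mathscr X=\vec E\cup V$ is a finite alphabet (letters $\epsilon$ and $\alpha$). For a ring $R$ and alphabet $X$, $R\langle\langle X\rangle\rangle$ is the ring of formal sums $\sum_{w}P_ww$ over words $w$ in $X$ (empty word $\mathbf 1$) with coefficients in $R$, with product $(PQ)_w=\sum_{w=uv}P_uQ_v$; $R\langle X\rangle$ is the subring of finite sums. Given a disjoint alphabet $Z=\{z_1,\dots,z_m\}$, a proper algebraic system is a set of equations $z_i=p_i(X,Z)$ with $p_i\in R\langle X\cup Z\rangle$ having no constant term and no term of the form $c z_j$; a solution is $(P_1,\dots,P_m)\in R\langle\langle X\rangle\rangle^m$ with $(P_i)_{\mathbf 1}=0$ and $P_i=p_i(X,P_1,\dots,P_m)$. $P$ is algebraic if $P-P_{\mathbf 1}\mathbf 1$ is a component of a solution of some proper algebraic system. $P^\alpha$ denotes the series $\mu(\alpha)\alpha+\sum_{\text{loops based at }\alpha}\mathrm{Tr}(X_{\epsilon_1}\cdots X_{\epsilon_n})\epsilon_1\cdots\epsilon_n$. *)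

theory Defs
  imports Complex_Main
begin

type_synonym ('x, 'r) ncseries = "'x list \<Rightarrow> 'r"

definition ncs_mult :: "('x, 'r::comm_ring_1) ncseries \<Rightarrow> ('x, 'r) ncseries \<Rightarrow> ('x, 'r) ncseries" where
  "ncs_mult P Q = (\<lambda>w. \<Sum>i\<le>length w. P (take i w) * Q (drop i w))"

definition ncs_one :: "('x, 'r::comm_ring_1) ncseries" where
  "ncs_one = (\<lambda>w. if w = [] then 1 else 0)"

definition ncs_letter :: "'x \<Rightarrow> ('x, 'r::comm_ring_1) ncseries" where
  "ncs_letter x = (\<lambda>w. if w = [x] then 1 else 0)"

fun ncs_word_eval :: "('y \<Rightarrow> ('x, 'r::comm_ring_1) ncseries) \<Rightarrow> 'y list \<Rightarrow> ('x, 'r) ncseries" where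
  "ncs_word_eval \<sigma> [] = ncs_one"
| "ncs_word_eval \<sigma> (a # u) = ncs_mult (\<sigma> a) (ncs_word_eval \<sigma> u)"

definition ncs_subst :: "('y list \<Rightarrow> 'r::comm_ring_1) \<Rightarrow> ('y \<Rightarrow> ('x, 'r) ncseries) \<Rightarrow> ('x, 'r) ncseries" where
  "ncs_subst p \<sigma> = (\<lambda>w. \<Sum>u\<in>{u. p u \<noteq> 0}. p u * ncs_word_eval \<sigma> u w)"

text \<open>Noncommutative polynomials in R<X \<union> Z>, with Z = {z_0,...,z_{m-1}} encoded as Inr j.\<close>
definition proper_alg_system :: "nat \<Rightarrow> (nat \<Rightarrow> ('x + nat) list \<Rightarrow> 'r::comm_ring_1) \<Rightarrow> bool" where
  "proper_alg_system m ps \<longleftrightarrow>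
     (\<forall>i<m. finite {u. ps i u \<noteq> 0}
        \<and> (\<forall>u. ps i u \<noteq> 0 \<longrightarrow> (\<forall>j. Inr j \<in> set u \<longrightarrow> j < m))
        \<and> ps i [] = 0
        \<and> (\<forall>j. ps i [Inr j] = 0))"

definition is_alg_solution :: "nat \<Rightarrow> (nat \<Rightarrow> ('x + nat) list \<Rightarrow> 'r::comm_ring_1) \<Rightarrow> (nat \<Rightarrow> ('x, 'r) ncseries) \<Rightarrow> bool" where
  "is_alg_solution m ps Ps \<longleftrightarrow>
     (\<forall>i<m. Ps i [] = 0 \<and>
        Ps i = ncs_subst (ps i) (\<lambda>l. case l of Inl x \<Rightarrow> ncs_letter x | Inr j \<Rightarrow> Ps j))"

definition nc_algebraic :: "('x, 'r::comm_ring_1) ncseries \<Rightarrow> bool" where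
  "nc_algebraic P \<longleftrightarrow>
     (\<exists>m ps Ps i. proper_alg_system m ps \<and> is_alg_solution m ps Ps \<and> i < m \<and>
        (\<lambda>w. if w = [] then 0 else P w) = Ps i)"

text \<open>Directed graph: vertices = UNIV :: 'v, directed edges = UNIV :: 'e, with source src,
  target tgt and reversal opp.\<close>

definition graph_ok :: "('e \<Rightarrow> 'v) \<Rightarrow> ('e \<Rightarrow> 'v) \<Rightarrow> ('e \<Rightarrow> 'e) \<Rightarrow> bool" where
  "graph_ok src tgt opp \<longleftrightarrow>
     (\<forall>e. opp (opp e) = e \<and> src (opp e) = tgt e \<and> tgt (opp e) = src e
          \<and> (opp e = e \<longleftrightarrow> src e = tgt e))
     \<and> (\<forall>u v. (u, v) \<in> {(src e, tgt e) | e. True}\<^sup>*)"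

text \<open>Basis of the full Fock space F(X): a pair (ws, v) with ws a path ending at v;
  ([], v) is p_v in C = C_0(V), and (e1...en, t(en)) is e1 \<otimes> ... \<otimes> en.\<close>

type_synonym ('e, 'v) fvec = "('e list \<times> 'v) \<Rightarrow> complex"

definition fock_start :: "('e \<Rightarrow> 'v) \<Rightarrow> 'e list \<times> 'v \<Rightarrow> 'v" where
  "fock_start src b = (case fst b of [] \<Rightarrow> snd b | e # _ \<Rightarrow> src e)"

definition fcreate :: "('e \<Rightarrow> 'v) \<Rightarrow> ('e \<Rightarrow> 'v) \<Rightarrow> 'e \<Rightarrow> ('e, 'v) fvec \<Rightarrow> ('e, 'v) fvec" where
  "fcreate src tgt \<epsilon> f = (\<lambda>(ws, v). case ws of [] \<Rightarrow> 0
      | e # ws' \<Rightarrow> (if e = \<epsilon> \<and> tgt \<epsilon> = fock_start src (ws', v) then f (ws', v) else 0))"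

definition fannih :: "('e \<Rightarrow> 'v) \<Rightarrow> ('e \<Rightarrow> 'v) \<Rightarrow> 'e \<Rightarrow> ('e, 'v) fvec \<Rightarrow> ('e, 'v) fvec" where
  "fannih src tgt \<epsilon> f = (\<lambda>(ws, v). if tgt \<epsilon> = fock_start src (ws, v) then f (\<epsilon> # ws, v) else 0)"

definition fproj :: "('e \<Rightarrow> 'v) \<Rightarrow> 'v \<Rightarrow> ('e, 'v) fvec \<Rightarrow> ('e, 'v) fvec" where
  "fproj src \<alpha> f = (\<lambda>b. if fock_start src b = \<alpha> then f b else 0)"

definition edge_a :: "('v \<Rightarrow> real) \<Rightarrow> ('e \<Rightarrow> 'v) \<Rightarrow> ('e \<Rightarrow> 'v) \<Rightarrow> 'e \<Rightarrow> complex" where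
  "edge_a \<mu> src tgt \<epsilon> = complex_of_real ((\<mu> (src \<epsilon>) / \<mu> (tgt \<epsilon>)) powr (1/4))"

text \<open>X_e, written in terms of one orientation eps of e (independent of the choice).\<close>
definition X_edge :: "('v \<Rightarrow> real) \<Rightarrow> ('e \<Rightarrow> 'v) \<Rightarrow> ('e \<Rightarrow> 'v) \<Rightarrow> ('e \<Rightarrow> 'e) \<Rightarrow> 'e
    \<Rightarrow> ('e, 'v) fvec \<Rightarrow> ('e, 'v) fvec" where
  "X_edge \<mu> src tgt opp \<epsilon> f =
     (if opp \<epsilon> = \<epsilon> then (\<lambda>b. fcreate src tgt \<epsilon> f b + fannih src tgt \<epsilon> f b)
      else (let a = edge_a \<mu> src tgt \<epsilon> in
        (\<lambda>b. a * fcreate src tgt \<epsilon> f b + inverse a * fannih src tgt (opp \<epsilon>) f b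
           + inverse a * fcreate src tgt (opp \<epsilon>) f b + a * fannih src tgt \<epsilon> f b)))"

definition X_dir :: "('v \<Rightarrow> real) \<Rightarrow> ('e \<Rightarrow> 'v) \<Rightarrow> ('e \<Rightarrow> 'v) \<Rightarrow> ('e \<Rightarrow> 'e) \<Rightarrow> 'e
    \<Rightarrow> ('e, 'v) fvec \<Rightarrow> ('e, 'v) fvec" where
  "X_dir \<mu> src tgt opp \<epsilon> =
     fproj src (src \<epsilon>) \<circ> X_edge \<mu> src tgt opp \<epsilon> \<circ> fproj src (tgt \<epsilon>)"

definition fbasis :: "'e list \<times> 'v \<Rightarrow> ('e, 'v) fvec" where
  "fbasis b = (\<lambda>b'. if b' = b then 1 else 0)"

text \<open>Tr = tr o E, E(x) = P x P, tr(p_v) = mu(v).\<close>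
definition fTr :: "('v::finite \<Rightarrow> real) \<Rightarrow> (('e, 'v) fvec \<Rightarrow> ('e, 'v) fvec) \<Rightarrow> complex" where
  "fTr \<mu> T = (\<Sum>v\<in>UNIV. complex_of_real (\<mu> v) * T (fbasis ([], v)) ([], v))"

definition is_loop_at :: "('e \<Rightarrow> 'v) \<Rightarrow> ('e \<Rightarrow> 'v) \<Rightarrow> 'v \<Rightarrow> 'e list \<Rightarrow> bool" where
  "is_loop_at src tgt \<alpha> es \<longleftrightarrow> es \<noteq> [] \<and> src (hd es) = \<alpha> \<and> tgt (last es) = \<alpha>
     \<and> (\<forall>k. Suc k < length es \<longrightarrow> tgt (es ! k) = src (es ! Suc k))"

datatype ('e, 'v) gletter = ELet 'e | VLet 'v

definition P_series :: "('v::finite \<Rightarrow> real) \<Rightarrow> ('e \<Rightarrow> 'v) \<Rightarrow> ('e \<Rightarrow> 'v) \<Rightarrow> ('e \<Rightarrow> 'e) \<Rightarrow> 'v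
    \<Rightarrow> (('e, 'v) gletter, complex) ncseries" where
  "P_series \<mu> src tgt opp \<alpha> = (\<lambda>w.
     if w = [VLet \<alpha>] then complex_of_real (\<mu> \<alpha>)
     else if (\<exists>es. w = map ELet es \<and> is_loop_at src tgt \<alpha> es)
       then fTr \<mu> (foldr (\<circ>) (map (X_dir \<mu> src tgt opp) (map (\<lambda>l. case l of ELet e \<Rightarrow> e) w)) id)
     else 0)"

end

theory Submission imports Defs begin


lemma tri: "(\<Sum>i<n. \<Sum>j<i. g j i) = (\<Sum>j<n. \<Sum>k<n - Suc j. g j (Suc (j + k)) :: 'a::comm_monoid_add)"
proof (induction n)
  case 0 then show ?case by simp
next
  case (Suc n)
  have "(\<Sum>j<Suc n. \<Sum>k<Suc n - Suc j. g j (Suc (j + k))) =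
        (\<Sum>j<n. \<Sum>k<Suc n - Suc j. g j (Suc (j + k)))" by simp
  also have "\<dots> = (\<Sum>j<n. (\<Sum>k<n - Suc j. g j (Suc (j + k))) + g j n)"
  proof (rule sum.cong[OF refl])
    fix j assume "j \<in> {..<n}"
    then have e: "Suc n - Suc j = Suc (n - Suc j)" by auto
    show "(\<Sum>k<Suc n - Suc j. g j (Suc (j + k))) = (\<Sum>k<n - Suc j. g j (Suc (j + k))) + g j n"
      unfolding e using \<open>j \<in> {..<n}\<close> by simp
  qed
  also have "\<dots> = (\<Sum>j<n. \<Sum>k<n - Suc j. g j (Suc (j + k))) + (\<Sum>j<n. g j n)"
    by (simp add: sum.distrib)
  finally show ?case using Suc by simp
qed

lemma mult_letter: "ncs_mult (ncs_letter x) P w = (case w of [] \<Rightarrow> 0 | b # w' \<Rightarrow> if b = x then P w' else 0)"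
proof (cases w)
  case Nil
  then show ?thesis by (simp add: ncs_mult_def ncs_letter_def)
next
  case (Cons b w')
  have "ncs_mult (ncs_letter x) P w = (\<Sum>i\<le>length w'. (if b = x \<and> take i w' = [] then P (drop i w') else 0))"
    unfolding ncs_mult_def ncs_letter_def Cons length_Cons sum.atMost_Suc_shift by (auto intro!: sum.cong)
  also have "\<dots> = (\<Sum>i\<le>length w'. (if i = 0 then (if b = x then P w' else 0) else 0))"
    by (rule sum.cong) auto
  also have "\<dots> = (if b = x then P w' else 0)" by simp
  finally show ?thesis using Cons by simp
qed

lemma mult_one_right: "ncs_mult P ncs_one = P"
proof
  fix w
  have "ncs_mult P ncs_one w = (\<Sum>i\<le>length w. (if i = length w then P w else 0))"
    unfolding ncs_mult_def ncs_one_def by (rule sum.cong) auto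
  then show "ncs_mult P ncs_one w = P w" by simp
qed

lemma mult_one_left: "ncs_mult ncs_one P = P"
proof
  fix w
  have "ncs_mult ncs_one P w = (\<Sum>i\<le>length w. (if i = 0 then P w else 0))"
    unfolding ncs_mult_def ncs_one_def by (rule sum.cong) auto
  then show "ncs_mult ncs_one P w = P w" by simp
qed

lemma mult_add_left: "ncs_mult (\<lambda>w. P w + Q w) R = (\<lambda>w. ncs_mult P R w + ncs_mult Q R w)"
  unfolding ncs_mult_def by (auto simp: sum.distrib ring_distribs)

lemma mult_add_right: "ncs_mult P (\<lambda>w. Q w + R w) = (\<lambda>w. ncs_mult P Q w + ncs_mult P R w)"
  unfolding ncs_mult_def by (auto simp: sum.distrib ring_distribs)

lemma four: "ncs_mult L1 (ncs_mult (\<lambda>w. ncs_one w + F1 w) (ncs_mult L2 (\<lambda>w. ncs_one w + F2 w))) w =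
   ncs_mult L1 (ncs_mult L2 ncs_one) w + ncs_mult L1 (ncs_mult F1 (ncs_mult L2 ncs_one)) w
   + ncs_mult L1 (ncs_mult L2 (ncs_mult F2 ncs_one)) w + ncs_mult L1 (ncs_mult F1 (ncs_mult L2 (ncs_mult F2 ncs_one))) w"
  by (simp add: mult_add_left mult_add_right mult_one_left mult_one_right add.assoc)

lemma subst_scale: "(c::'a::idom) \<noteq> 0 \<Longrightarrow> ncs_subst (\<lambda>u. c * p u) \<sigma> w = c * ncs_subst p \<sigma> w"
proof -
  assume c: "c \<noteq> 0"
  have "{u. c * p u \<noteq> 0} = {u. p u \<noteq> 0}" using c by auto
  then show ?thesis unfolding ncs_subst_def by (simp add: sum_distrib_left mult.assoc)
qed

lemma subst_lin:
  assumes S: "finite S" "{u. p u \<noteq> 0} \<subseteq> S" and E: "finite E"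
    and p: "\<And>u. p u = (\<Sum>q\<in>E. c q * (if u = m q then 1 else 0))" and mS: "\<And>q. q \<in> E \<Longrightarrow> m q \<in> S"
  shows "ncs_subst p \<sigma> w = (\<Sum>q\<in>E. c q * ncs_word_eval \<sigma> (m q) w)"
proof -
  have "ncs_subst p \<sigma> w = (\<Sum>u\<in>S. p u * ncs_word_eval \<sigma> u w)"
    unfolding ncs_subst_def by (rule sum.mono_neutral_left) (use S in auto)
  also have "\<dots> = (\<Sum>u\<in>S. \<Sum>q\<in>E. c q * ((if u = m q then 1 else 0) * ncs_word_eval \<sigma> u w))"
    by (simp add: p sum_distrib_right mult.assoc)
  also have "\<dots> = (\<Sum>q\<in>E. c q * (\<Sum>u\<in>S. (if u = m q then 1 else 0) * ncs_word_eval \<sigma> u w))"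
    by (subst sum.swap) (simp add: sum_distrib_left)
  also have "\<dots> = (\<Sum>q\<in>E. c q * ncs_word_eval \<sigma> (m q) w)"
  proof (rule sum.cong[OF refl])
    fix q assume q: "q \<in> E"
    have "(\<Sum>u\<in>S. (if u = m q then 1 else 0) * ncs_word_eval \<sigma> u w)
       = (\<Sum>u\<in>S. if u = m q then ncs_word_eval \<sigma> u w else 0)" by (rule sum.cong) auto
    also have "\<dots> = ncs_word_eval \<sigma> (m q) w" using mS[OF q] S by simp
    finally show "c q * (\<Sum>u\<in>S. (if u = m q then 1 else 0) * ncs_word_eval \<sigma> u w) =
       c q * ncs_word_eval \<sigma> (m q) w" by simp
  qed
  finally show ?thesis .
qed

locale qg =
  fixes \<mu> :: "'v::finite \<Rightarrow> real" and src tgt :: "'e::finite \<Rightarrow> 'v" and opp :: "'e \<Rightarrow> 'e"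
  assumes g: "graph_ok src tgt opp" and pos: "\<And>v. \<mu> v > 0"
begin

abbreviation a where "a \<equiv> edge_a \<mu> src tgt"

lemma opp_props: "opp (opp e) = e" "src (opp e) = tgt e" "tgt (opp e) = src e"
  "(opp e = e) = (src e = tgt e)"
  using g unfolding graph_ok_def by auto

lemma opp_simps[simp]: "opp (opp e) = e" "src (opp e) = tgt e" "tgt (opp e) = src e"
  using opp_props by auto

lemma a_loop: "src e = tgt e \<Longrightarrow> a e = 1"
  using pos[of "src e"] by (simp add: edge_a_def)

lemma Xd_formula:
  "X_dir \<mu> src tgt opp \<epsilon> f (ws, v) =
   (if fock_start src (ws,v) = src \<epsilon> then
      a \<epsilon> * (case ws of [] \<Rightarrow> 0 | e' # ws' \<Rightarrow>
          if e' = \<epsilon> \<and> tgt \<epsilon> = fock_start src (ws',v) then f (ws',v) else 0)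
      + inverse (a \<epsilon>) * f (opp \<epsilon> # ws, v)
    else 0)"
proof (cases "opp \<epsilon> = \<epsilon>")
  case True
  then have st: "src \<epsilon> = tgt \<epsilon>" using opp_props by auto
  show ?thesis using True st a_loop[OF st]
    by (auto simp: X_dir_def X_edge_def fproj_def fcreate_def fannih_def fock_start_def
        split: list.splits)
next
  case False
  then have st: "src \<epsilon> \<noteq> tgt \<epsilon>" using opp_props by auto
  show ?thesis using False st
    by (auto simp: X_dir_def X_edge_def fproj_def fcreate_def fannih_def fock_start_def Let_def
        split: list.splits)
qed

fun Amp :: "'v \<Rightarrow> 'e list \<Rightarrow> 'e list \<Rightarrow> complex" where
  "Amp v [] ws = (if ws = [] then 1 else 0)"
| "Amp v (e # es) ws = (if fock_start src (ws,v) = src e then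
      a e * (case ws of [] \<Rightarrow> 0 | e' # ws' \<Rightarrow>
          if e' = e \<and> tgt e = fock_start src (ws',v) then Amp v es ws' else 0)
      + inverse (a e) * Amp v es (opp e # ws)
    else 0)"

lemma foldr_Amp:
  "foldr (\<circ>) (map (X_dir \<mu> src tgt opp) es) id (fbasis ([], v)) (ws, v) = Amp v es ws"
proof (induction es arbitrary: ws)
  case Nil
  then show ?case by (simp add: fbasis_def)
next
  case (Cons e es)
  show ?case using Cons.IH
    by (simp add: Xd_formula split: list.splits)
qed

definition A2P :: "'e list \<Rightarrow> bool" where
  "A2P u \<longleftrightarrow> (\<forall>v h ws. Amp v u (h # ws) = (\<Sum>i<length u. if u!i = h then Amp (src h) (take i u) []
      * (a h * (if tgt h = fock_start src (ws,v) then Amp v (drop (Suc i) u) ws else 0)) else 0))"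

lemma D_of:
  assumes "A2P u"
  shows "Amp v (e#u) [] = (if src e = v then inverse (a e) * (\<Sum>i<length u. if u!i = opp e then
      Amp (tgt e) (take i u) [] * (a (opp e) * Amp v (drop (Suc i) u) []) else 0) else 0)"
proof -
  have H: "Amp v u [opp e] = (\<Sum>i<length u. if u!i = opp e then Amp (tgt e) (take i u) [] *
     (a (opp e) * (if src e = v then Amp v (drop (Suc i) u) [] else 0)) else 0)"
    using assms unfolding A2P_def by (simp add: fock_start_def cong: if_cong)
  show ?thesis by (simp add: H fock_start_def sum_distrib_left if_distrib cong: if_cong)
qed

lemma A2: "A2P u"
proof (induction "length u" arbitrary: u rule: less_induct)
  case less
  show ?case
  proof (cases u)
    case Nil
    then show ?thesis by (simp add: A2P_def)
  next
    case (Cons e u')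
    have IH: "\<And>w. length w \<le> length u' \<Longrightarrow> A2P w" using less Cons by auto
    show ?thesis unfolding A2P_def
    proof (intro allI)
      fix v h ws
      define n where "n = length u'"
      define C where "C = (tgt h = fock_start src (ws,v))"
      define A where "A j = Amp (tgt e) (take j u') []" for j
      define G where "G j i = (if u'!j = opp e \<and> u'!i = h then A j * (a (opp e) *
         (Amp (src h) (take (i - Suc j) (drop (Suc j) u')) [] * (a h * (if C then Amp v (drop (Suc i) u') ws else 0))))
         else 0)" for j i
      have S1: "Amp v u' (opp e # h # ws) = (if src e = src h then
           (\<Sum>j<n. \<Sum>k<n - Suc j. G j (Suc (j + k))) else 0)"
      proof -
        have "Amp v u' (opp e # h # ws) = (\<Sum>j<n. if u'!j = opp e then A j * (a (opp e) *
           (if src e = src h then Amp v (drop (Suc j) u') (h#ws) else 0)) else 0)"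
          using IH[of u', unfolded A2P_def, rule_format, of v "opp e" "h # ws"]
          by (simp add: fock_start_def n_def A_def cong: if_cong)
        also have "\<dots> = (if src e = src h then (\<Sum>j<n. \<Sum>k<n - Suc j. G j (Suc (j + k))) else 0)"
        proof (cases "src e = src h")
          case True
          have "(\<Sum>j<n. if u'!j = opp e then A j * (a (opp e) * Amp v (drop (Suc j) u') (h#ws)) else 0)
               = (\<Sum>j<n. \<Sum>k<n - Suc j. G j (Suc (j + k)))"
          proof (rule sum.cong[OF refl])
            fix j assume j: "j \<in> {..<n}"
            have "Amp v (drop (Suc j) u') (h#ws) = (\<Sum>k<n - Suc j. if u'!(Suc (j+k)) = h then
               Amp (src h) (take k (drop (Suc j) u')) [] * (a h * (if C then Amp v (drop (Suc (Suc (j+k))) u') ws else 0)) else 0)"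
              using IH[of "drop (Suc j) u'", unfolded A2P_def, rule_format, of v h ws] j
              by (simp add: n_def C_def add.commute cong: if_cong)
            then show "(if u'!j = opp e then A j * (a (opp e) * Amp v (drop (Suc j) u') (h#ws)) else 0)
               = (\<Sum>k<n - Suc j. G j (Suc (j + k)))"
              by (cases "u'!j = opp e") (auto simp: G_def sum_distrib_left intro!: sum.cong)
          qed
          then show ?thesis using True by (simp cong: if_cong)
        qed (simp cong: if_cong)
        finally show ?thesis .
      qed
      have S2: "Amp (src h) (e # take i u') [] = (if src e = src h then inverse (a e) *
          (\<Sum>j<i. if u'!j = opp e then A j * (a (opp e) * Amp (src h) (take (i - Suc j) (drop (Suc j) u')) []) else 0) else 0)"
        if i: "i < n" for i
      proof -
        have "A2P (take i u')" using IH i n_def by simp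
        note DD = D_of[OF this, of "src h" e]
        have L: "length (take i u') = i" using i n_def by simp
        have "(\<Sum>ia<length (take i u'). if take i u' ! ia = opp e
                then Amp (tgt e) (take ia (take i u')) [] *
                     (a (opp e) * Amp (src h) (drop (Suc ia) (take i u')) []) else 0)
             = (\<Sum>j<i. if u'!j = opp e then A j * (a (opp e) * Amp (src h) (take (i - Suc j) (drop (Suc j) u')) []) else 0)"
          unfolding L by (rule sum.cong) (auto simp: A_def drop_take min_def)
        then show ?thesis using DD by simp
      qed
      have "(\<Sum>i<length u. if u!i = h then Amp (src h) (take i u) []
          * (a h * (if C then Amp v (drop (Suc i) u) ws else 0)) else 0)
        = (if e = h then a h * (if C then Amp v u' ws else 0) else 0) +
          (\<Sum>i<n. if u'!i = h then Amp (src h) (e # take i u') []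
          * (a h * (if C then Amp v (drop (Suc i) u') ws else 0)) else 0)"
        unfolding Cons length_Cons sum.lessThan_Suc_shift by (simp add: n_def cong: if_cong)
      also have "(\<Sum>i<n. if u'!i = h then Amp (src h) (e # take i u') []
          * (a h * (if C then Amp v (drop (Suc i) u') ws else 0)) else 0)
          = (if src e = src h then inverse (a e) * (\<Sum>i<n. \<Sum>j<i. G j i) else 0)"
      proof (cases "src e = src h")
        case True
        have "(\<Sum>i<n. if u'!i = h then Amp (src h) (e # take i u') []
          * (a h * (if C then Amp v (drop (Suc i) u') ws else 0)) else 0)
          = (\<Sum>i<n. inverse (a e) * (\<Sum>j<i. G j i))"
        proof (rule sum.cong[OF refl])
          fix i assume i: "i \<in> {..<n}"
          have E: "Amp (src h) (e # take i u') [] = inverse (a e) *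
            (\<Sum>j<i. if u'!j = opp e then A j * (a (opp e) * Amp (src h) (take (i - Suc j) (drop (Suc j) u')) []) else 0)"
            using S2[of i] True i by simp
          show "(if u'!i = h then Amp (src h) (e # take i u') []
            * (a h * (if C then Amp v (drop (Suc i) u') ws else 0)) else 0) = inverse (a e) * (\<Sum>j<i. G j i)"
            unfolding E by (cases "u'!i = h"; cases C) (auto simp: G_def sum_distrib_left sum_distrib_right mult_ac cong: if_cong intro!: sum.cong)
        qed
        then show ?thesis using True by (simp add: sum_distrib_left)
      next
        case False
        have Z: "\<And>i. i < n \<Longrightarrow> Amp (src h) (e # take i u') [] = 0" using S2 False by (simp del: Amp.simps)
        show ?thesis using False by (auto intro!: sum.neutral simp: Z simp del: Amp.simps)
      qed
      finally have R: "(\<Sum>i<length u. if u!i = h then Amp (src h) (take i u) []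
          * (a h * (if C then Amp v (drop (Suc i) u) ws else 0)) else 0)
        = (if e = h then a h * (if C then Amp v u' ws else 0) else 0) +
          (if src e = src h then inverse (a e) * (\<Sum>i<n. \<Sum>j<i. G j i) else 0)" .
      have L: "Amp v u (h # ws) = (if src h = src e then a e * (if e = h \<and> C then Amp v u' ws else 0)
          + inverse (a e) * Amp v u' (opp e # h # ws) else 0)"
        by (simp add: Cons C_def fock_start_def)
      show "Amp v u (h # ws) = (\<Sum>i<length u. if u!i = h then Amp (src h) (take i u) []
          * (a h * (if tgt h = fock_start src (ws,v) then Amp v (drop (Suc i) u) ws else 0)) else 0)"
        unfolding C_def[symmetric] R L S1 tri[symmetric] by auto
    qed
  qed
qed

lemma D: "Amp v (e#u) [] = (if src e = v then inverse (a e) * (\<Sum>i<length u. if u!i = opp e then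
      Amp (tgt e) (take i u) [] * (a (opp e) * Amp v (drop (Suc i) u) []) else 0) else 0)"
  by (rule D_of[OF A2])

fun path :: "'v \<Rightarrow> 'e list \<Rightarrow> 'v \<Rightarrow> bool" where
  "path x [] y = (x = y)"
| "path x (e # es) y = (src e = x \<and> path (tgt e) es y)"

lemma path_append: "path x (p @ q) z \<longleftrightarrow> (\<exists>y. path x p y \<and> path y q z)"
  by (induction p arbitrary: x) auto

lemma path_loop: "path x es y \<Longrightarrow> es \<noteq> [] \<Longrightarrow> src (hd es) = x \<and> tgt (last es) = y
   \<and> (\<forall>k. Suc k < length es \<longrightarrow> tgt (es ! k) = src (es ! Suc k))"
proof (induction es arbitrary: x)
  case Nil then show ?case by simp
next
  case (Cons e es)
  show ?case
  proof (cases "es = []")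
    case True then show ?thesis using Cons.prems by simp
  next
    case False
    have IH: "src (hd es) = tgt e \<and> tgt (last es) = y \<and> (\<forall>k. Suc k < length es \<longrightarrow> tgt (es ! k) = src (es ! Suc k))"
      using Cons.IH[of "tgt e"] Cons.prems False by simp
    have "\<forall>k. Suc k < length (e # es) \<longrightarrow> tgt ((e#es) ! k) = src ((e#es) ! Suc k)"
    proof (intro allI impI)
      fix k assume k: "Suc k < length (e # es)"
      show "tgt ((e#es) ! k) = src ((e#es) ! Suc k)"
      proof (cases k)
        case 0 then show ?thesis using IH False by (simp add: hd_conv_nth)
      next
        case (Suc k') then show ?thesis using IH k by simp
      qed
    qed
    then show ?thesis using IH Cons.prems False by simp
  qed
qed

lemma Amp_path: "Amp v es [] \<noteq> 0 \<Longrightarrow> path v es v"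
proof (induction "length es" arbitrary: es v rule: less_induct)
  case less
  show ?case
  proof (cases es)
    case Nil then show ?thesis by simp
  next
    case (Cons e u)
    have nz: "Amp v (e#u) [] \<noteq> 0" using less.prems Cons by simp
    have sv: "src e = v" by (rule ccontr) (use nz in \<open>simp add: D del: Amp.simps\<close>)
    have S: "(\<Sum>i<length u. if u!i = opp e then
      Amp (tgt e) (take i u) [] * (a (opp e) * Amp v (drop (Suc i) u) []) else 0) \<noteq> 0"
      using nz sv by (simp add: D del: Amp.simps)
    obtain i where "i \<in> {..<length u}" "(if u!i = opp e then
      Amp (tgt e) (take i u) [] * (a (opp e) * Amp v (drop (Suc i) u) []) else 0) \<noteq> 0"
      by (rule sum.not_neutral_contains_not_neutral[OF S])
    then have i: "i < length u" "u ! i = opp e" "Amp (tgt e) (take i u) [] \<noteq> 0"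
        "Amp v (drop (Suc i) u) [] \<noteq> 0" by (simp_all split: if_splits del: Amp.simps)
    have p1: "path (tgt e) (take i u) (tgt e)" using less.hyps[of "take i u" "tgt e"] i Cons by simp
    have p2: "path v (drop (Suc i) u) v" using less.hyps[of "drop (Suc i) u" v] i Cons by simp
    have u: "u = take i u @ opp e # drop (Suc i) u" using id_take_nth_drop[OF i(1)] i(2) by metis
    have "path v (e # take i u @ opp e # drop (Suc i) u) v"
      using p1 p2 sv by (simp add: path_append)
    then show ?thesis unfolding Cons by (subst u)
  qed
qed

definition N :: nat where "N = card (UNIV :: 'v set)"
definition hh :: "nat \<Rightarrow> 'v" where "hh = (SOME h. bij_betw h {..<N} (UNIV::'v set))"
definition idx :: "'v \<Rightarrow> nat" where "idx y = inv_into {..<N} hh y"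

lemma hh_bij: "bij_betw hh {..<N} UNIV"
proof -
  obtain h where "bij_betw h {0..<card (UNIV::'v set)} (UNIV::'v set)"
    using ex_bij_betw_nat_finite[of "UNIV :: 'v set"] by auto
  then have "\<exists>h. bij_betw h {..<N} (UNIV::'v set)" by (auto simp: N_def atLeast0LessThan)
  then show ?thesis unfolding hh_def by (rule someI_ex)
qed

lemma idx: "idx y < N" "hh (idx y) = y"
proof -
  show "hh (idx y) = y" unfolding idx_def by (rule bij_betw_inv_into_right[OF hh_bij]) simp
  have "bij_betw (inv_into {..<N} hh) UNIV {..<N}" by (rule bij_betw_inv_into[OF hh_bij])
  then show "idx y < N" unfolding idx_def bij_betw_def by auto
qed

definition F :: "'v \<Rightarrow> ('e, 'v) gletter list \<Rightarrow> complex" where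
  "F y w = (if w \<noteq> [] \<and> (\<forall>l\<in>set w. \<exists>e. l = ELet e) then Amp y (map (\<lambda>l. case l of ELet e \<Rightarrow> e) w) [] else 0)"

definition Bs :: "'v \<Rightarrow> ('e, 'v) gletter list \<Rightarrow> complex" where
  "Bs y = (\<lambda>w. ncs_one w + F y w)"

lemma F_nil[simp]: "F y [] = 0" by (simp add: F_def)

lemma map_unE[simp]: "map (\<lambda>l. case l of ELet e \<Rightarrow> e) (map ELet es) = es"
  by (induction es) auto

lemma unE_comp[simp]: "((\<lambda>l. case l of ELet e \<Rightarrow> e) \<circ> ELet) = (\<lambda>e. e)"
  by (rule ext) simp

lemma F_map: "es \<noteq> [] \<Longrightarrow> F y (map ELet es) = Amp y es []"
  by (simp add: F_def)

lemma Bs_map: "Bs y (map ELet es) = Amp y es []"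
  by (cases es) (simp_all add: Bs_def ncs_one_def F_def)

lemma F_bad: "\<exists>l\<in>set w. \<forall>e. l \<noteq> ELet e \<Longrightarrow> F y w = 0"
  by (auto simp: F_def)

lemma Bs_bad: "\<exists>l\<in>set w. \<forall>e. l \<noteq> ELet e \<Longrightarrow> Bs y w = 0"
  by (auto simp: Bs_def F_def ncs_one_def)

lemma allE_map: "\<forall>l\<in>set w. \<exists>e. l = ELet e \<Longrightarrow> w = map ELet (map (\<lambda>l. case l of ELet e \<Rightarrow> e) w)"
  by (induction w) auto

definition cc :: "'e \<Rightarrow> complex" where "cc e = inverse (a e) * a (opp e)"

definition T :: "'v \<Rightarrow> 'e \<Rightarrow> ('e, 'v) gletter list \<Rightarrow> complex" where
  "T y e = ncs_mult (ncs_letter (ELet e)) (ncs_mult (Bs (tgt e)) (ncs_mult (ncs_letter (ELet (opp e))) (Bs y)))"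

lemma key: "F y w = (\<Sum>e\<in>{e. src e = y}. cc e * T y e w)"
proof (cases w)
  case Nil
  then show ?thesis by (simp add: T_def mult_letter)
next
  case (Cons b w')
  define M where "M e = ncs_mult (Bs (tgt e)) (ncs_mult (ncs_letter (ELet (opp e))) (Bs y)) w'" for e
  have Tb: "T y e w = (if b = ELet e then M e else 0)" for e
    by (simp add: T_def mult_letter Cons M_def)
  show ?thesis
  proof (cases b)
    case (VLet v0)
    then have "F y w = 0" using Cons by (intro F_bad) auto
    then show ?thesis by (simp add: Tb VLet)
  next
    case (ELet e0)
    have R: "(\<Sum>e\<in>{e. src e = y}. cc e * T y e w) = (if src e0 = y then cc e0 * M e0 else 0)"
    proof -
      have "(\<Sum>e\<in>{e. src e = y}. cc e * T y e w) = (\<Sum>e\<in>{e. src e = y}. if e0 = e then cc e * M e else 0)"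
        by (rule sum.cong) (auto simp: Tb ELet)
      then show ?thesis by simp
    qed
    show ?thesis
    proof (cases "\<forall>l\<in>set w'. \<exists>e. l = ELet e")
      case True
      define es where "es = map (\<lambda>l. case l of ELet e \<Rightarrow> e) w'"
      have w': "w' = map ELet es" using allE_map[OF True] es_def by simp
      have Fw: "F y w = Amp y (e0 # es) []"
        using F_map[of "e0 # es" y] by (simp add: Cons ELet w')
      have "M e0 = (\<Sum>i\<le>length es. Bs (tgt e0) (map ELet (take i es)) *
            ncs_mult (ncs_letter (ELet (opp e0))) (Bs y) (map ELet (drop i es)))"
        by (simp add: M_def ncs_mult_def w' take_map drop_map)
      also have "\<dots> = (\<Sum>i<length es. Bs (tgt e0) (map ELet (take i es)) *
            ncs_mult (ncs_letter (ELet (opp e0))) (Bs y) (map ELet (drop i es)))"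
        by (simp add: lessThan_Suc_atMost[symmetric] mult_letter)
      also have "\<dots> = (\<Sum>i<length es. if es!i = opp e0 then Amp (tgt e0) (take i es) [] *
            Amp y (drop (Suc i) es) [] else 0)"
      proof (rule sum.cong[OF refl])
        fix i assume i: "i \<in> {..<length es}"
        then have d: "drop i es = es!i # drop (Suc i) es" by (simp add: Cons_nth_drop_Suc)
        show "Bs (tgt e0) (map ELet (take i es)) *
            ncs_mult (ncs_letter (ELet (opp e0))) (Bs y) (map ELet (drop i es)) =
            (if es!i = opp e0 then Amp (tgt e0) (take i es) [] * Amp y (drop (Suc i) es) [] else 0)"
          unfolding d by (simp add: Bs_map mult_letter)
      qed
      finally have Me: "M e0 = \<dots>" .
      show ?thesis unfolding R Fw Me unfolding D
        by (auto simp: cc_def sum_distrib_left mult_ac intro!: sum.cong)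
    next
      case False
      then have "F y w = 0" using Cons by (intro F_bad) auto
      moreover have "M e0 = 0"
        unfolding M_def ncs_mult_def[of "Bs (tgt e0)"]
      proof (intro sum.neutral ballI)
        fix i assume "i \<in> {..length w'}"
        show "Bs (tgt e0) (take i w') * ncs_mult (ncs_letter (ELet (opp e0))) (Bs y) (drop i w') = 0"
        proof (cases "\<exists>l\<in>set (take i w'). \<forall>e. l \<noteq> ELet e")
          case True then show ?thesis by (simp add: Bs_bad)
        next
          case nt: False
          have "\<exists>l\<in>set (drop i w'). \<forall>e. l \<noteq> ELet e"
            using False nt by (metis append_take_drop_id Un_iff set_append)
          then obtain l where l: "l \<in> set (drop i w')" "\<forall>e. l \<noteq> ELet e" by blast
          show ?thesis
          proof (cases "drop i w'")
            case Nil then show ?thesis by (simp add: mult_letter)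
          next
            case (Cons b r)
            have "b = ELet (opp e0) \<Longrightarrow> Bs y r = 0"
              using l Cons by (intro Bs_bad) auto
            then show ?thesis using Cons by (simp add: mult_letter)
          qed
        qed
      qed
      ultimately show ?thesis using R by simp
    qed
  qed
qed

definition mono :: "'e \<Rightarrow> nat \<Rightarrow> (('e,'v) gletter + nat) list" where
 "mono e k = (if k = 0 then [Inl (ELet e), Inl (ELet (opp e))]
   else if k = 1 then [Inl (ELet e), Inr (idx (tgt e)), Inl (ELet (opp e))]
   else if k = 2 then [Inl (ELet e), Inl (ELet (opp e)), Inr (idx (src e))]
   else [Inl (ELet e), Inr (idx (tgt e)), Inl (ELet (opp e)), Inr (idx (src e))])"

definition pol :: "'v \<Rightarrow> (('e,'v) gletter + nat) list \<Rightarrow> complex" where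
 "pol x u = (\<Sum>q\<in>{e. src e = x} \<times> {..<4::nat}. cc (fst q) * (if u = mono (fst q) (snd q) then 1 else 0))"

definition Ps :: "'v \<Rightarrow> nat \<Rightarrow> ('e,'v) gletter list \<Rightarrow> complex" where
 "Ps \<alpha> j = (if j = N then (\<lambda>w. complex_of_real (\<mu> \<alpha>) * F \<alpha> w) else F (hh j))"

definition sig :: "'v \<Rightarrow> (('e,'v) gletter + nat) \<Rightarrow> ('e,'v) gletter list \<Rightarrow> complex" where
 "sig \<alpha> l = (case l of Inl x \<Rightarrow> ncs_letter x | Inr j \<Rightarrow> Ps \<alpha> j)"

definition ps :: "'v \<Rightarrow> nat \<Rightarrow> (('e,'v) gletter + nat) list \<Rightarrow> complex" where
 "ps \<alpha> j u = (if j = N then complex_of_real (\<mu> \<alpha>) * pol \<alpha> u else pol (hh j) u)"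

abbreviation SS where "SS \<equiv> (\<lambda>q. mono (fst q) (snd q)) ` (UNIV \<times> {..<4::nat})"

lemma sig_idx[simp]: "sig \<alpha> (Inr (idx y)) = F y"
  using idx[of y] by (simp add: sig_def Ps_def)

lemma sig_Inl[simp]: "sig \<alpha> (Inl x) = ncs_letter x"
  by (simp add: sig_def)

lemma pol_zero: "u \<notin> SS \<Longrightarrow> pol x u = 0"
  unfolding pol_def by (rule sum.neutral) force

lemma ps_supp: "ps \<alpha> j u \<noteq> 0 \<Longrightarrow> u \<in> SS"
  using pol_zero unfolding ps_def by (auto split: if_splits)

lemma finite_SS: "finite SS" by simp

lemma SS_Inr: "u \<in> SS \<Longrightarrow> Inr j \<in> set u \<Longrightarrow> j < N"
  using idx by (auto simp: mono_def split: if_splits)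

lemma SS_nil: "[] \<notin> SS" by (auto simp: mono_def)
lemma SS_single: "[x] \<notin> SS" by (auto simp: mono_def)

lemma evals: "src e = x \<Longrightarrow> (\<Sum>k<4. ncs_word_eval (sig \<alpha>) (mono e k) w) = T x e w"
proof -
  assume x: "src e = x"
  have s4: "(\<Sum>k<4. f k) = f 0 + f 1 + f 2 + f 3" for f :: "nat \<Rightarrow> complex"
    by (simp add: eval_nat_numeral)
  show ?thesis unfolding s4 T_def Bs_def four
    by (simp add: mono_def x mult_one_right)
qed

lemma subst_pol: "ncs_subst (pol x) (sig \<alpha>) w = (\<Sum>e\<in>{e. src e = x}. cc e * T x e w)"
proof -
  have "ncs_subst (pol x) (sig \<alpha>) w =
    (\<Sum>q\<in>{e. src e = x} \<times> {..<4::nat}. cc (fst q) * ncs_word_eval (sig \<alpha>) (mono (fst q) (snd q)) w)"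
  proof (rule subst_lin[where S = SS and E = "{e. src e = x} \<times> {..<4::nat}"
      and c = "\<lambda>q. cc (fst q)" and m = "\<lambda>q. mono (fst q) (snd q)"])
    show "finite SS" by simp
    show "{u. pol x u \<noteq> 0} \<subseteq> SS" using pol_zero by blast
    show "finite ({e. src e = x} \<times> {..<4::nat})" by simp
    show "pol x u = (\<Sum>q\<in>{e. src e = x} \<times> {..<4::nat}. cc (fst q) * (if u = mono (fst q) (snd q) then 1 else 0))" for u
      by (simp add: pol_def)
    show "mono (fst q) (snd q) \<in> SS" if "q \<in> {e. src e = x} \<times> {..<4::nat}" for q
      using that by auto
  qed
  also have "\<dots> = (\<Sum>e\<in>{e. src e = x}. \<Sum>k<4. cc e * ncs_word_eval (sig \<alpha>) (mono e k) w)"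
    by (simp add: sum.cartesian_product')
  also have "\<dots> = (\<Sum>e\<in>{e. src e = x}. cc e * T x e w)"
    by (rule sum.cong) (auto simp: sum_distrib_left[symmetric] evals)
  finally show ?thesis .
qed

lemma F_eq: "F x = ncs_subst (pol x) (sig \<alpha>)"
  by (rule ext) (simp add: subst_pol key[symmetric])

lemma ps_fin: "finite {u. ps \<alpha> i u \<noteq> 0}"
  by (rule finite_subset[OF _ finite_SS]) (auto dest: ps_supp)

lemma ps_Inr: "ps \<alpha> i u \<noteq> 0 \<Longrightarrow> Inr j \<in> set u \<Longrightarrow> j < Suc N"
  using ps_supp SS_Inr less_SucI by blast

lemma ps_nil: "ps \<alpha> i [] = 0" using ps_supp SS_nil by blast
lemma ps_single: "ps \<alpha> i [Inr j] = 0" using ps_supp SS_single by blast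

lemma proper: "proper_alg_system (Suc N) (ps \<alpha>)"
  unfolding proper_alg_system_def using ps_fin ps_Inr ps_nil ps_single by blast

lemma sig_eq: "(\<lambda>l. case l of Inl x \<Rightarrow> ncs_letter x | Inr j \<Rightarrow> Ps \<alpha> j) = sig \<alpha>"
  by (rule ext) (simp add: sig_def)

lemma sol_i: "Ps \<alpha> i = ncs_subst (ps \<alpha> i) (sig \<alpha>)"
proof (cases "i = N")
  case True
  have m: "complex_of_real (\<mu> \<alpha>) \<noteq> 0" using pos[of \<alpha>] by simp
  have pN: "ps \<alpha> N = (\<lambda>u. complex_of_real (\<mu> \<alpha>) * pol \<alpha> u)" by (rule ext) (simp add: ps_def)
  show ?thesis
  proof
    fix w
    show "Ps \<alpha> i w = ncs_subst (ps \<alpha> i) (sig \<alpha>) w"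
      using subst_scale[OF m, of "pol \<alpha>" "sig \<alpha>" w] True F_eq[of \<alpha> \<alpha>]
      by (simp add: Ps_def pN)
  qed
next
  case False
  have "ps \<alpha> i = pol (hh i)" by (rule ext) (simp add: ps_def False)
  then show ?thesis using F_eq[of "hh i" \<alpha>] False by (simp add: Ps_def)
qed

lemma solution: "is_alg_solution (Suc N) (ps \<alpha>) (Ps \<alpha>)"
proof -
  have h1: "\<And>i. Ps \<alpha> i [] = 0" by (simp add: Ps_def)
  show ?thesis unfolding is_alg_solution_def sig_eq using h1 sol_i by blast
qed

lemma target: "(\<lambda>w. if w = [] then 0 else P_series \<mu> src tgt opp \<alpha> w
            - complex_of_real (\<mu> \<alpha>) * ncs_letter (VLet \<alpha>) w) = Ps \<alpha> N"
proof
  fix w :: "('e,'v) gletter list"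
  show "(if w = [] then 0 else P_series \<mu> src tgt opp \<alpha> w
            - complex_of_real (\<mu> \<alpha>) * ncs_letter (VLet \<alpha>) w) = Ps \<alpha> N w"
  proof (cases "w = []")
    case True then show ?thesis by (simp add: Ps_def)
  next
    case ne: False
    show ?thesis
    proof (cases "w = [VLet \<alpha>]")
      case True
      have "F \<alpha> w = 0" using True by (intro F_bad) auto
      then show ?thesis using True by (simp add: Ps_def P_series_def ncs_letter_def)
    next
      case nv: False
      show ?thesis
      proof (cases "\<exists>es. w = map ELet es \<and> is_loop_at src tgt \<alpha> es")
        case True
        then obtain es where w: "w = map ELet es" and l: "is_loop_at src tgt \<alpha> es" by blast
        obtain e es' where es: "es = e # es'" and se: "src e = \<alpha>"
          using l unfolding is_loop_at_def by (cases es) auto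
        have "fTr \<mu> (foldr (\<circ>) (map (X_dir \<mu> src tgt opp) (map (\<lambda>l. case l of ELet e \<Rightarrow> e) w)) id)
            = (\<Sum>v\<in>UNIV. complex_of_real (\<mu> v) * Amp v es [])"
          unfolding fTr_def w map_unE foldr_Amp by simp
        also have "\<dots> = (\<Sum>v\<in>UNIV. if v = \<alpha> then complex_of_real (\<mu> \<alpha>) * Amp \<alpha> es [] else 0)"
          by (rule sum.cong) (auto simp: es fock_start_def se)
        also have "\<dots> = complex_of_real (\<mu> \<alpha>) * Amp \<alpha> es []" by simp
        finally have "fTr \<mu> (foldr (\<circ>) (map (X_dir \<mu> src tgt opp) (map (\<lambda>l. case l of ELet e \<Rightarrow> e) w)) id)
            = complex_of_real (\<mu> \<alpha>) * Amp \<alpha> es []" .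
        moreover have "F \<alpha> w = Amp \<alpha> es []" unfolding w by (rule F_map) (simp add: es)
        ultimately show ?thesis using True nv ne
          by (simp add: Ps_def P_series_def ncs_letter_def del: Amp.simps)
      next
        case nl: False
        have "F \<alpha> w = 0"
        proof (cases "\<forall>l\<in>set w. \<exists>e. l = ELet e")
          case True
          define es where "es = map (\<lambda>l. case l of ELet e \<Rightarrow> e) w"
          have w: "w = map ELet es" using allE_map[OF True] es_def by simp
          have esne: "es \<noteq> []" using ne w by auto
          have "Amp \<alpha> es [] = 0"
          proof (rule ccontr)
            assume "Amp \<alpha> es [] \<noteq> 0"
            then have "path \<alpha> es \<alpha>" by (rule Amp_path)
            then have "is_loop_at src tgt \<alpha> es"
              using path_loop esne unfolding is_loop_at_def by blast
            then show False using nl w by blast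
          qed
          then show ?thesis using F_map[OF esne] w by simp
        next
          case False then show ?thesis by (intro F_bad) auto
        qed
        moreover have "P_series \<mu> src tgt opp \<alpha> w = 0"
          unfolding P_series_def by (simp only: nv nl if_False)
        ultimately show ?thesis using nv ne
          by (simp add: Ps_def ncs_letter_def)
      qed
    qed
  qed
qed

lemma main: "nc_algebraic (\<lambda>w. P_series \<mu> src tgt opp \<alpha> w
            - complex_of_real (\<mu> \<alpha>) * ncs_letter (VLet \<alpha>) w)"
  unfolding nc_algebraic_def
  using proper[of \<alpha>] solution[of \<alpha>] target[of \<alpha>] by blast

end

theorem lemma3p12:
  fixes \<mu> :: "'v::finite \<Rightarrow> real" and src tgt :: "'e::finite \<Rightarrow> 'v" and opp :: "'e \<Rightarrow> 'e"
    and \<alpha> :: 'v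
  assumes "graph_ok src tgt opp"
    and "\<And>v. \<mu> v > 0"
  shows "nc_algebraic (\<lambda>w. P_series \<mu> src tgt opp \<alpha> w
            - complex_of_real (\<mu> \<alpha>) * ncs_letter (VLet \<alpha>) w)"
proof -
  interpret qg \<mu> src tgt opp by unfold_locales (use assms in auto)
  show ?thesis by (rule main)
qed

end
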